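(* Let $(X,\mathfrak{m})$ be a measurable space with $\mathfrak{m}$ an infinite $\sigma$-algebra containing every finite subset of $X$, and let $X^*=\mathfrak{m}^\beta\setminus e(X)$. Then every nonempty $G_\delta$-subset of $X^*$ has nonempty interior in $X^*$.
   Context: An $\mathfrak{m}$-filter is a family $p\subseteq\mathfrak{m}$ with $\emptyset\notin p$, $X\in p$, closed under supersets belonging to $\mathfrak{m}$ and under finite intersections; an $\mathfrak{m}$-ultrafilter is a maximal $\mathfrak{m}$-filter; $\mathfrak{m}^\beta$ is the set of all $\mathfrak{m}$-ultrafilters, topologized by the base $\{\widehat{A}:A\in\mathfrak{m}\}$ where $\widehat{A}=\{p\in\mathfrak{m}^\beta:A\in p\}$. The map $e:X\to\mathfrak{m}^\beta$ is $e(x)=\{A\in\mathfrak{m}:x\in A\}$. $X^*$ carries the subspace topology. *)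

theory Defs
  imports "HOL-Analysis.Analysis"
begin

definition m_filter :: "'a set \<Rightarrow> 'a set set \<Rightarrow> 'a set set \<Rightarrow> bool" where
  "m_filter X m p \<longleftrightarrow> p \<subseteq> m \<and> {} \<notin> p \<and> X \<in> p \<and>
     (\<forall>A\<in>p. \<forall>B\<in>m. A \<subseteq> B \<longrightarrow> B \<in> p) \<and>
     (\<forall>A\<in>p. \<forall>B\<in>p. A \<inter> B \<in> p)"

definition m_ultrafilter :: "'a set \<Rightarrow> 'a set set \<Rightarrow> 'a set set \<Rightarrow> bool" where
  "m_ultrafilter X m p \<longleftrightarrow> m_filter X m p \<and> (\<forall>q. m_filter X m q \<and> p \<subseteq> q \<longrightarrow> q = p)"

definition m_beta :: "'a set \<Rightarrow> 'a set set \<Rightarrow> 'a set set set" where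
  "m_beta X m = {p. m_ultrafilter X m p}"

definition m_hat :: "'a set \<Rightarrow> 'a set set \<Rightarrow> 'a set \<Rightarrow> 'a set set set" where
  "m_hat X m A = {p \<in> m_beta X m. A \<in> p}"

definition m_beta_top :: "'a set \<Rightarrow> 'a set set \<Rightarrow> 'a set set topology" where
  "m_beta_top X m = topology_generated_by {m_hat X m A | A. A \<in> m}"

definition m_e :: "'a set \<Rightarrow> 'a set set \<Rightarrow> 'a \<Rightarrow> 'a set set" where
  "m_e X m x = {A \<in> m. x \<in> A}"

definition m_star :: "'a set \<Rightarrow> 'a set set \<Rightarrow> 'a set set set" where
  "m_star X m = m_beta X m - m_e X m ` X"

end

theory Submission
  imports Defs
begin

lemma filt_int: "m_filter X m p \<Longrightarrow> A\<in>p \<Longrightarrow> B\<in>p \<Longrightarrow> A\<inter>B\<in>p"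
  unfolding m_filter_def by blast

lemma filt_up: "m_filter X m p \<Longrightarrow> A\<in>p \<Longrightarrow> B\<in>m \<Longrightarrow> A \<subseteq> B \<Longrightarrow> B\<in>p"
  unfolding m_filter_def by blast

lemma filt_sub: "m_filter X m p \<Longrightarrow> A\<in>p \<Longrightarrow> A\<in>m"
  unfolding m_filter_def by blast

lemma filt_ne: "m_filter X m p \<Longrightarrow> {} \<notin> p"
  unfolding m_filter_def by blast

lemma ultra_prime:
  assumes sa: "sigma_algebra X m" and u: "m_ultrafilter X m p" and A: "A \<in> m"
  shows "A \<in> p \<or> X - A \<in> p"
proof (rule ccontr)
  assume c: "\<not> (A \<in> p \<or> X - A \<in> p)"
  have f: "m_filter X m p" using u unfolding m_ultrafilter_def by blast
  interpret sigma_algebra X m by fact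
  show False
  proof (cases "\<exists>P\<in>p. P \<inter> A = {}")
    case True
    then obtain P where P: "P\<in>p" "P \<inter> A = {}" by blast
    have "P \<subseteq> X" using filt_sub[OF f P(1)] sets_into_space by blast
    hence "P \<subseteq> X - A" using P by blast
    hence "X - A \<in> p" using filt_up[OF f P(1)] A by blast
    thus False using c by blast
  next
    case False
    define q where "q = {C\<in>m. \<exists>P\<in>p. P \<inter> A \<subseteq> C}"
    have "m_filter X m q"
      unfolding m_filter_def
    proof (intro conjI)
      show "q \<subseteq> m" unfolding q_def by blast
      show "{} \<notin> q" unfolding q_def using False by blast
      show "X \<in> q" unfolding q_def using f unfolding m_filter_def by blast
      show "\<forall>A\<in>q. \<forall>B\<in>m. A \<subseteq> B \<longrightarrow> B \<in> q" unfolding q_def by blast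
      show "\<forall>Aa\<in>q. \<forall>B\<in>q. Aa \<inter> B \<in> q"
      proof (intro ballI)
        fix C1 C2 assume "C1 \<in> q" "C2 \<in> q"
        then obtain P1 P2 where "P1\<in>p" "P2\<in>p" "P1 \<inter> A \<subseteq> C1" "P2 \<inter> A \<subseteq> C2" "C1\<in>m" "C2\<in>m"
          unfolding q_def by blast
        moreover have "P1 \<inter> P2 \<in> p" using filt_int[OF f] calculation by blast
        ultimately show "C1 \<inter> C2 \<in> q" unfolding q_def by blast
      qed
    qed
    moreover have "p \<subseteq> q" unfolding q_def using filt_sub[OF f] by blast
    ultimately have "q = p" using u unfolding m_ultrafilter_def by blast
    moreover have "A \<in> q" unfolding q_def using A f unfolding m_filter_def by blast
    ultimately show False using c by blast
  qed
qed

lemma star_cofin: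
  assumes sa: "sigma_algebra X m" and fin: "\<forall>F. F \<subseteq> X \<and> finite F \<longrightarrow> F \<in> m"
    and p: "p \<in> m_star X m" and x: "x \<in> X"
  shows "X - {x} \<in> p"
proof (rule ccontr)
  assume c: "X - {x} \<notin> p"
  interpret sigma_algebra X m by fact
  have u: "m_ultrafilter X m p" using p unfolding m_star_def m_beta_def by blast
  have f: "m_filter X m p" using u unfolding m_ultrafilter_def by blast
  have xm: "{x} \<in> m" using fin x by blast
  have "X - {x} \<in> m" using xm by blast
  hence "X - (X - {x}) \<in> p" using ultra_prime[OF sa u] c by blast
  hence xp: "{x} \<in> p" using x by (metis Diff_Diff_Int Int_absorb1 empty_subsetI insert_subset)
  have "p = m_e X m x"
  proof
    show "p \<subseteq> m_e X m x"
    proof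
      fix A assume "A \<in> p"
      hence "A \<inter> {x} \<in> p" "A \<in> m" using filt_int[OF f _ xp] filt_sub[OF f] by auto
      hence "x \<in> A" using filt_ne[OF f] by (metis Int_insert_right_if0 inf_bot_right)
      thus "A \<in> m_e X m x" unfolding m_e_def using \<open>A\<in>m\<close> by blast
    qed
    show "m_e X m x \<subseteq> p" unfolding m_e_def using filt_up[OF f xp] by blast
  qed
  thus False using p x unfolding m_star_def by blast
qed

lemma star_finite:
  assumes sa: "sigma_algebra X m" and fin: "\<forall>F. F \<subseteq> X \<and> finite F \<longrightarrow> F \<in> m"
    and p: "p \<in> m_star X m" and A: "A \<in> p"
  shows "infinite A"
proof
  assume fA: "finite A"
  interpret sigma_algebra X m by fact
  have u: "m_ultrafilter X m p" using p unfolding m_star_def m_beta_def by blast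
  have f: "m_filter X m p" using u unfolding m_ultrafilter_def by blast
  have AX: "A \<subseteq> X" using filt_sub[OF f A] sets_into_space by blast
  have "F \<subseteq> X \<longrightarrow> A - F \<in> p" if "finite F" for F
    using that
  proof (induction F rule: finite_induct)
    case empty then show ?case using A by simp
  next
    case (insert x F)
    show ?case
    proof
      assume "insert x F \<subseteq> X"
      hence "A - F \<in> p" "X - {x} \<in> p" using insert star_cofin[OF sa fin p] by auto
      hence "(A - F) \<inter> (X - {x}) \<in> p" using filt_int[OF f] by blast
      moreover have "(A - F) \<inter> (X - {x}) = A - insert x F" using AX by blast
      ultimately show "A - insert x F \<in> p" by simp
    qed
  qed
  from this[OF fA] AX have "{} \<in> p" by simp
  thus False using filt_ne[OF f] by blast
qed

lemma exists_nonprincipal: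
  assumes sa: "sigma_algebra X m" and fin: "\<forall>F. F \<subseteq> X \<and> finite F \<longrightarrow> F \<in> m"
    and B: "B \<in> m" "infinite B"
  shows "\<exists>q\<in>m_star X m. B \<in> q"
proof -
  interpret sigma_algebra X m by fact
  have BX: "B \<subseteq> X" using B sets_into_space by blast
  define F0 where "F0 = {C\<in>m. \<exists>K. finite K \<and> B - K \<subseteq> C}"
  have F0f: "m_filter X m F0"
    unfolding m_filter_def
  proof (intro conjI)
    show "F0 \<subseteq> m" unfolding F0_def by blast
    show "{} \<notin> F0"
    proof
      assume "{} \<in> F0"
      then obtain K where "finite K" "B - K \<subseteq> {}" unfolding F0_def by blast
      hence "B \<subseteq> K" by blast
      thus False using B(2) \<open>finite K\<close> finite_subset by blast
    qed
    show "X \<in> F0" unfolding F0_def using BX top by (intro CollectI conjI exI[of _ "{}"]) auto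
    show "\<forall>A\<in>F0. \<forall>B\<in>m. A \<subseteq> B \<longrightarrow> B \<in> F0" unfolding F0_def by blast
    show "\<forall>A\<in>F0. \<forall>B\<in>F0. A \<inter> B \<in> F0"
    proof (intro ballI)
      fix C1 C2 assume "C1 \<in> F0" "C2 \<in> F0"
      then obtain K1 K2 where "finite K1" "finite K2" "B - K1 \<subseteq> C1" "B - K2 \<subseteq> C2" "C1\<in>m" "C2\<in>m"
        unfolding F0_def by blast
      hence "finite (K1 \<union> K2)" "B - (K1 \<union> K2) \<subseteq> C1 \<inter> C2" "C1 \<inter> C2 \<in> m" by auto
      thus "C1 \<inter> C2 \<in> F0" unfolding F0_def by blast
    qed
  qed
  define Af where "Af = {q. m_filter X m q \<and> F0 \<subseteq> q}"
  have "\<forall>C\<in>chains Af. \<exists>U\<in>Af. \<forall>X\<in>C. X \<subseteq> U"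
  proof
    fix C assume C: "C \<in> chains Af"
    show "\<exists>U\<in>Af. \<forall>X\<in>C. X \<subseteq> U"
    proof (cases "C = {}")
      case True
      then show ?thesis using F0f unfolding Af_def by blast
    next
      case False
      have CA: "C \<subseteq> Af" and ch: "\<forall>x\<in>C. \<forall>y\<in>C. x \<subseteq> y \<or> y \<subseteq> x"
        using C unfolding chains_def chain_subset_def by auto
      have Cf: "\<And>c. c \<in> C \<Longrightarrow> m_filter X m c" using CA unfolding Af_def by blast
      obtain c0 where c0: "c0 \<in> C" using False by blast
      have "m_filter X m (\<Union>C)"
        unfolding m_filter_def
      proof (intro conjI)
        show "\<Union>C \<subseteq> m" using Cf filt_sub by blast
        show "{} \<notin> \<Union>C" using Cf filt_ne by blast
        show "X \<in> \<Union>C" using Cf[OF c0] c0 unfolding m_filter_def by blast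
        show "\<forall>A\<in>\<Union>C. \<forall>B\<in>m. A \<subseteq> B \<longrightarrow> B \<in> \<Union>C"
        proof (intro ballI impI)
          fix A1 B1 assume "A1 \<in> \<Union>C" "B1 \<in> m" "A1 \<subseteq> B1"
          then obtain c where "c \<in> C" "A1 \<in> c" by blast
          hence "B1 \<in> c" using filt_up[OF Cf] \<open>B1 \<in> m\<close> \<open>A1 \<subseteq> B1\<close> by blast
          thus "B1 \<in> \<Union>C" using \<open>c \<in> C\<close> by blast
        qed
        show "\<forall>A\<in>\<Union>C. \<forall>B\<in>\<Union>C. A \<inter> B \<in> \<Union>C"
        proof (intro ballI)
          fix A1 A2 assume "A1 \<in> \<Union>C" "A2 \<in> \<Union>C"
          then obtain c1 c2 where c: "c1\<in>C" "c2\<in>C" "A1\<in>c1" "A2\<in>c2" by blast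
          show "A1 \<inter> A2 \<in> \<Union>C"
          proof (cases "c1 \<subseteq> c2")
            case True
            hence "A1 \<in> c2" using c by blast
            hence "A1 \<inter> A2 \<in> c2" using c filt_int[OF Cf[OF c(2)]] by blast
            then show ?thesis using c by blast
          next
            case False
            hence "c2 \<subseteq> c1" using ch c by blast
            hence "A2 \<in> c1" using c by blast
            hence "A1 \<inter> A2 \<in> c1" using c filt_int[OF Cf[OF c(1)]] by blast
            then show ?thesis using c by blast
          qed
        qed
      qed
      moreover have "F0 \<subseteq> \<Union>C" using CA c0 unfolding Af_def by blast
      ultimately show ?thesis unfolding Af_def by blast
    qed
  qed
  from Zorn_Lemma2[OF this] obtain M where M: "M \<in> Af" "\<forall>X\<in>Af. M \<subseteq> X \<longrightarrow> X = M" by blast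
  have Mu: "m_ultrafilter X m M"
    unfolding m_ultrafilter_def
  proof (intro conjI allI impI)
    show "m_filter X m M" using M(1) unfolding Af_def by blast
    fix q assume q: "m_filter X m q \<and> M \<subseteq> q"
    have "F0 \<subseteq> M" using M(1) unfolding Af_def by blast
    hence "q \<in> Af" using q unfolding Af_def by blast
    thus "q = M" using M(2) q by blast
  qed
  have "M \<in> m_star X m"
    unfolding m_star_def m_beta_def
  proof (intro DiffI CollectI Mu notI)
    assume "M \<in> m_e X m ` X"
    then obtain x where x: "x \<in> X" "M = m_e X m x" by blast
    have "{x} \<in> m" using fin x by blast
    hence "X - {x} \<in> m" using top by blast
    moreover have "B - {x} \<subseteq> X - {x}" using BX by blast
    ultimately have "X - {x} \<in> F0" unfolding F0_def by (intro CollectI conjI exI[of _ "{x}"]) auto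
    hence "X - {x} \<in> M" using M unfolding Af_def by blast
    thus False using x unfolding m_e_def by blast
  qed
  moreover have "B \<in> F0" unfolding F0_def using B by (intro CollectI conjI exI[of _ "{}"]) auto
  hence "B \<in> M" using M unfolding Af_def by blast
  ultimately show ?thesis by blast
qed

lemma open_base:
  assumes f: "\<And>p. p \<in> m_beta X m \<Longrightarrow> m_filter X m p"
  assumes "generate_topology_on {m_hat X m A | A. A \<in> m} U" and "p \<in> U"
  shows "\<exists>A\<in>m. p \<in> m_hat X m A \<and> m_hat X m A \<subseteq> U"
  using assms(2,3)
proof (induction arbitrary: p rule: generate_topology_on.induct)
  case Empty
  then show ?case by simp
next
  case (Int a b)
  then obtain A1 A2 where A: "A1\<in>m" "p \<in> m_hat X m A1" "m_hat X m A1 \<subseteq> a"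
    "A2\<in>m" "p \<in> m_hat X m A2" "m_hat X m A2 \<subseteq> b" by blast
  have fp: "m_filter X m p" using A(2) f unfolding m_hat_def by blast
  have "A1 \<inter> A2 \<in> m" using A fp filt_sub filt_int unfolding m_hat_def by blast
  moreover have "p \<in> m_hat X m (A1 \<inter> A2)" using A fp filt_int unfolding m_hat_def by blast
  moreover have "m_hat X m (A1 \<inter> A2) \<subseteq> a \<inter> b"
  proof
    fix r assume r: "r \<in> m_hat X m (A1 \<inter> A2)"
    hence fr: "m_filter X m r" using f unfolding m_hat_def by blast
    have "A1 \<in> r" "A2 \<in> r" using r fr filt_up A(1,4) unfolding m_hat_def by blast+
    thus "r \<in> a \<inter> b" using A r unfolding m_hat_def by blast
  qed
  ultimately show ?case by blast
next
  case (UN K)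
  then obtain k where "k \<in> K" "p \<in> k" by blast
  with UN show ?case by blast
next
  case (Basis s)
  then show ?case by blast
qed

primrec pick :: "(nat \<Rightarrow> 'a set) \<Rightarrow> nat \<Rightarrow> 'a list" where
  "pick D 0 = []"
| "pick D (Suc n) = (SOME y. y \<in> D n \<and> y \<notin> set (pick D n)) # pick D n"

lemma pick_props:
  fixes D :: "nat \<Rightarrow> 'a set"
  assumes inf: "\<And>n. infinite (D n)"
  shows "hd (pick D (Suc n)) \<in> D n \<and> hd (pick D (Suc n)) \<notin> set (pick D n)"
    and "set (pick D n) = (\<lambda>n. hd (pick D (Suc n))) ` {..<n}"
proof -
  show a: "hd (pick D (Suc n)) \<in> D n \<and> hd (pick D (Suc n)) \<notin> set (pick D n)" for n
  proof -
    have "D n - set (pick D n) \<noteq> {}" using inf[of n]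
      by (metis Diff_eq_empty_iff List.finite_set finite_subset)
    hence "\<exists>z. z \<in> D n \<and> z \<notin> set (pick D n)" by blast
    hence "(SOME z. z \<in> D n \<and> z \<notin> set (pick D n)) \<in> D n \<and> (SOME z. z \<in> D n \<and> z \<notin> set (pick D n)) \<notin> set (pick D n)"
      by (rule someI_ex)
    thus ?thesis by simp
  qed
  show "set (pick D n) = (\<lambda>n. hd (pick D (Suc n))) ` {..<n}"
  proof (induction n)
    case 0 then show ?case by simp
  next
    case (Suc n)
    have "set (pick D (Suc n)) = insert (hd (pick D (Suc n))) (set (pick D n))" by simp
    then show ?case using Suc by (simp add: lessThan_Suc)
  qed
qed

lemma pick_seq:
  fixes D :: "nat \<Rightarrow> 'a set"
  assumes inf: "\<And>n. infinite (D n)"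
  shows "\<exists>y. inj y \<and> (\<forall>n. y n \<in> D n)"
proof -
  define y where "y = (\<lambda>n. hd (pick D (Suc n)))"
  have p1: "y n \<in> D n \<and> y n \<notin> y ` {..<n}" for n
    using pick_props(1)[OF inf, where n=n] pick_props(2)[OF inf, where n=n] unfolding y_def by simp
  have "inj y"
  proof (rule injI, rule ccontr)
    fix i j assume e: "y i = y j" "i \<noteq> j"
    show False
    proof (cases "i < j")
      case True then show False using p1[of j] e by (metis imageI lessThan_iff)
    next
      case False then have "j < i" using e by simp
      then show False using p1[of i] e by (metis imageI lessThan_iff)
    qed
  qed
  thus ?thesis using p1 by blast
qed

theorem theorem3p2:
  fixes X :: "'a set" and m :: "'a set set"
  assumes "sigma_algebra X m"
    and "infinite m"
    and "\<forall>F. F \<subseteq> X \<and> finite F \<longrightarrow> F \<in> m"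
    and "G \<noteq> {}"
    and "gdelta_in (subtopology (m_beta_top X m) (m_star X m)) G"
  shows "(subtopology (m_beta_top X m) (m_star X m)) interior_of G \<noteq> {}"
proof -
  note sa = assms(1) and fin = assms(3)
  interpret sigma_algebra X m by fact
  define T where "T = m_beta_top X m"
  define Sub where "Sub = subtopology T (m_star X m)"
  have fb: "\<And>p. p \<in> m_beta X m \<Longrightarrow> m_filter X m p"
    unfolding m_beta_def m_ultrafilter_def by blast
  have "(countable intersection_of openin Sub relative_to topspace Sub) G"
    using assms(5) unfolding gdelta_in_def Sub_def T_def .
  then obtain S' where S': "(countable intersection_of openin Sub) S'" "G = topspace Sub \<inter> S'"
    unfolding relative_to_def by blast
  then obtain U where U0: "\<forall>u\<in>U. openin Sub u" "countable U" "\<Inter>U = S'"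
    unfolding intersection_of_def by blast
  have U: "\<forall>u\<in>U. openin Sub u" "countable U" "G = topspace Sub \<inter> \<Inter>U"
    using U0 S' by auto
  define C where "C = insert (topspace Sub) U"
  have C: "countable C" "C \<noteq> {}" "\<forall>u\<in>C. openin Sub u" "G = \<Inter>C" "topspace Sub \<in> C"
  proof -
    show "countable C" unfolding C_def using U(2) by (rule countable_insert)
    show "C \<noteq> {}" unfolding C_def by simp
    show "\<forall>u\<in>C. openin Sub u" unfolding C_def using U(1) by simp
    show "G = \<Inter>C" unfolding C_def using U(3) by simp
    show "topspace Sub \<in> C" unfolding C_def by simp
  qed
  define f where "f = from_nat_into C"
  have rf: "range f = C" unfolding f_def by (rule range_from_nat_into[OF C(2) C(1)])
  obtain p where pG: "p \<in> G" using assms(4) by blast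
  have "\<forall>n. \<exists>A. A \<in> m \<and> A \<in> p \<and> m_hat X m A \<inter> m_star X m \<subseteq> f n"
  proof
    fix n
    have "openin Sub (f n)" using C rf by blast
    then obtain T' where T': "openin T T'" "f n = T' \<inter> m_star X m"
      unfolding Sub_def openin_subtopology by blast
    have "f n \<in> C" using rf by blast
    hence "p \<in> f n" using pG C(4) by blast
    hence pT: "p \<in> T'" using T' by blast
    have gT: "generate_topology_on {m_hat X m A | A. A \<in> m} T'"
      using T'(1) unfolding T_def m_beta_top_def openin_topology_generated_by_iff .
    have "\<exists>A\<in>m. p \<in> m_hat X m A \<and> m_hat X m A \<subseteq> T'"
      by (rule open_base[OF fb gT pT])
    then obtain A where "A\<in>m" "p \<in> m_hat X m A" "m_hat X m A \<subseteq> T'" by blast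
    thus "\<exists>A. A \<in> m \<and> A \<in> p \<and> m_hat X m A \<inter> m_star X m \<subseteq> f n"
      using T' unfolding m_hat_def by blast
  qed
  then obtain A where A: "\<And>n. A n \<in> m" "\<And>n. A n \<in> p" "\<And>n. m_hat X m (A n) \<inter> m_star X m \<subseteq> f n"
    by metis
  have "p \<in> topspace Sub" using pG C(4,5) by blast
  hence pstar: "p \<in> m_star X m" unfolding Sub_def by simp
  have pu: "m_ultrafilter X m p" using pstar unfolding m_star_def m_beta_def by blast
  have pf: "m_filter X m p" using pu unfolding m_ultrafilter_def by blast
  define D where "D n = \<Inter>(A ` {..n})" for n
  have Dp: "D n \<in> p" for n
  proof (induction n)
    case 0 then show ?case using A unfolding D_def by simp
  next
    case (Suc n)
    have "D (Suc n) = D n \<inter> A (Suc n)" unfolding D_def by (auto simp: atMost_Suc)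
    then show ?case using Suc A filt_int[OF pf] by simp
  qed
  have Dm: "D n \<in> m" for n using Dp filt_sub[OF pf] by blast
  have DA: "D n \<subseteq> A n" for n unfolding D_def by blast
  have Ddec: "n \<le> k \<Longrightarrow> D k \<subseteq> D n" for n k unfolding D_def by auto
  have Dinf: "\<And>n. infinite (D n)" using star_finite[OF sa fin pstar Dp] by blast
  obtain y where y: "inj y" "\<And>n. y n \<in> D n" using pick_seq[of D] Dinf by blast
  define B where "B = range y"
  have BX: "B \<subseteq> X" unfolding B_def using y(2) Dm sets_into_space by blast
  have Bm: "B \<in> m"
    by (rule countable) (use BX fin in \<open>auto simp: B_def\<close>)
  have Binf: "infinite B" unfolding B_def using y(1) range_inj_infinite by blast
  have Bfin: "finite (B - D n)" for n
  proof -
    have "B - D n \<subseteq> y ` {..<n}"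
    proof
      fix z assume z: "z \<in> B - D n"
      then obtain k where k: "z = y k" unfolding B_def by blast
      have "\<not> n \<le> k" using z k y(2)[of k] Ddec[of n k] by blast
      thus "z \<in> y ` {..<n}" using k by auto
    qed
    thus ?thesis by (rule finite_subset) simp
  qed
  obtain q where q: "q \<in> m_star X m" "B \<in> q" using exists_nonprincipal[OF sa fin Bm Binf] by blast
  define W where "W = m_hat X m B \<inter> m_star X m"
  have Wo: "openin Sub W"
    unfolding Sub_def openin_subtopology W_def T_def m_beta_top_def openin_topology_generated_by_iff
    using Bm by (blast intro: generate_topology_on.Basis)
  have WG: "W \<subseteq> G"
  proof
    fix r assume r: "r \<in> W"
    have rs: "r \<in> m_star X m" and rB: "B \<in> r" using r unfolding W_def m_hat_def by auto
    have ru: "m_ultrafilter X m r" using rs unfolding m_star_def m_beta_def by blast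
    have rfil: "m_filter X m r" using ru unfolding m_ultrafilter_def by blast
    have "r \<in> f n" for n
    proof -
      have "D n \<in> r"
      proof (rule ccontr)
        assume "D n \<notin> r"
        hence "X - D n \<in> r" using ultra_prime[OF sa ru Dm] by blast
        hence "B \<inter> (X - D n) \<in> r" using filt_int[OF rfil rB] by blast
        moreover have "B \<inter> (X - D n) = B - D n" using BX by blast
        ultimately have "B - D n \<in> r" by simp
        thus False using star_finite[OF sa fin rs] Bfin by blast
      qed
      hence "A n \<in> r" using filt_up[OF rfil _ A(1) DA] by blast
      hence "r \<in> m_hat X m (A n) \<inter> m_star X m" using rs unfolding m_hat_def m_star_def by blast
      thus ?thesis using A(3) by blast
    qed
    thus "r \<in> G" unfolding C(4) rf[symmetric] by blast
  qed
  have "W \<subseteq> Sub interior_of G" using interior_of_maximal[OF WG Wo] .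
  moreover have "q \<in> W" using q unfolding W_def m_hat_def m_star_def by blast
  ultimately show ?thesis unfolding Sub_def T_def by blast
qed

end
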